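(* Let $n\geq 4$ and let $T_n$ be the group with generators $z,t_1,\dots,t_{n-1}$ and relations $t_i^2=1$ ($1\le i\le n-1$), $(t_jt_{j+1})^3=1$ ($1\le j\le n-2$), $(t_kt_l)^2=z$ (for $k\le l-2$), $z^2=1$ and $zt_i=t_iz$ ($1\le i\le n-1$). Let $i,j\in\{1,\dots,n\}$ with $i\neq j$ and let $k\in\{1,\dots,n-1\}$. Then \[ s_k\triangleright [i\;j]=[s_k(i)\;s_k(j)]\,z . \]
   Context: $\mathbb{S}_n$ is the symmetric group, $s_k=(k\;k+1)$ denotes the adjacent transposition, and $p:T_n\to\mathbb{S}_n$ is the surjective homomorphism with $p(t_k)=s_k$, $p(z)=1$; its kernel is $\langle z\rangle$, which is central of order $2$. For $\sigma\in\mathbb{S}_n$ and $t\in T_n$, define $\sigma\triangleright t=\bar\sigma t\bar\sigma^{-1}$, where $\bar\sigma\in T_n$ is any element with $p(\bar\sigma)=\sigma$ (this is independent of the choice since $z$ is central). For $1\le i,j\le n$, $i\ne j$, the elements $[i\;j]\in T_n$ are defined inductively by $[i\;i+1]=t_i$; $[i\;j]=(s_i\triangleright[i+1\;j])\,z$ for $i+1<j$; and $[j\;i]=[i\;j]\,z$ for $i<j$. *)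

theory Defs
  imports "HOL-Algebra.Algebra"
begin

definition Tn_presented :: "('a, 'b) monoid_scheme \<Rightarrow> nat \<Rightarrow> 'a \<Rightarrow> (nat \<Rightarrow> 'a) \<Rightarrow> bool" where
  "Tn_presented G n z t \<longleftrightarrow>
     group G \<and> z \<in> carrier G \<and> (\<forall>i\<in>{1..n-1}. t i \<in> carrier G) \<and>
     carrier G = generate G (insert z (t ` {1..n-1})) \<and>
     (\<forall>i\<in>{1..n-1}. t i \<otimes>\<^bsub>G\<^esub> t i = \<one>\<^bsub>G\<^esub>) \<and>
     (\<forall>j\<in>{1..n-2}. (t j \<otimes>\<^bsub>G\<^esub> t (j+1)) [^]\<^bsub>G\<^esub> (3::nat) = \<one>\<^bsub>G\<^esub>) \<and>
     (\<forall>k\<in>{1..n-1}. \<forall>l\<in>{1..n-1}. k + 2 \<le> l \<longrightarrow>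
         (t k \<otimes>\<^bsub>G\<^esub> t l) [^]\<^bsub>G\<^esub> (2::nat) = z) \<and>
     z \<otimes>\<^bsub>G\<^esub> z = \<one>\<^bsub>G\<^esub> \<and>
     (\<forall>i\<in>{1..n-1}. z \<otimes>\<^bsub>G\<^esub> t i = t i \<otimes>\<^bsub>G\<^esub> z)"

definition sadj :: "nat \<Rightarrow> nat \<Rightarrow> nat" where
  "sadj k = Transposition.transpose k (Suc k)"

definition tri :: "('a, 'b) monoid_scheme \<Rightarrow> ('a \<Rightarrow> nat \<Rightarrow> nat) \<Rightarrow> (nat \<Rightarrow> nat) \<Rightarrow> 'a \<Rightarrow> 'a" where
  "tri G p \<sigma> x = (let g = (SOME g. g \<in> carrier G \<and> p g = \<sigma>) in
      g \<otimes>\<^bsub>G\<^esub> x \<otimes>\<^bsub>G\<^esub> inv\<^bsub>G\<^esub> g)"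

text \<open>brk_up G p z t i d = [i  i+d+1].\<close>
fun brk_up :: "('a, 'b) monoid_scheme \<Rightarrow> ('a \<Rightarrow> nat \<Rightarrow> nat) \<Rightarrow> 'a \<Rightarrow> (nat \<Rightarrow> 'a) \<Rightarrow> nat \<Rightarrow> nat \<Rightarrow> 'a" where
  "brk_up G p z t i 0 = t i"
| "brk_up G p z t i (Suc d) = tri G p (sadj i) (brk_up G p z t (Suc i) d) \<otimes>\<^bsub>G\<^esub> z"

definition brk :: "('a, 'b) monoid_scheme \<Rightarrow> ('a \<Rightarrow> nat \<Rightarrow> nat) \<Rightarrow> 'a \<Rightarrow> (nat \<Rightarrow> 'a) \<Rightarrow> nat \<Rightarrow> nat \<Rightarrow> 'a" where
  "brk G p z t i j =
     (if i < j then brk_up G p z t i (j - i - 1)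
      else brk_up G p z t j (i - j - 1) \<otimes>\<^bsub>G\<^esub> z)"

end

theory Submission
  imports Defs
begin

locale tnp =
  fixes G :: "('a, 'b) monoid_scheme" (structure)
    and n :: nat and z :: 'a and t :: "nat \<Rightarrow> 'a" and p :: "'a \<Rightarrow> nat \<Rightarrow> nat"
  assumes pres: "Tn_presented G n z t"
    and phom: "p \<in> hom G (sym_group n)"
    and pt: "\<forall>m\<in>{1..n-1}. p (t m) = sadj m"
    and ker: "kernel G (sym_group n) p = generate G {z}"

sublocale tnp \<subseteq> group G
  using pres by (simp add: Tn_presented_def)

context tnp
begin

lemma t_car [simp]: "1 \<le> m \<Longrightarrow> m < n \<Longrightarrow> t m \<in> carrier G"
  using pres unfolding Tn_presented_def by auto

lemma z_car [simp]: "z \<in> carrier G"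
  using pres unfolding Tn_presented_def by auto

lemma zz [simp]: "z \<otimes> z = \<one>"
  using pres unfolding Tn_presented_def by auto

lemma zz2 [simp]: "x \<in> carrier G \<Longrightarrow> z \<otimes> (z \<otimes> x) = x"
  by (simp add: m_assoc[symmetric])

lemma tt [simp]: "1 \<le> m \<Longrightarrow> m < n \<Longrightarrow> t m \<otimes> t m = \<one>"
  using pres unfolding Tn_presented_def by auto

lemma tt2 [simp]: "1 \<le> m \<Longrightarrow> m < n \<Longrightarrow> x \<in> carrier G \<Longrightarrow> t m \<otimes> (t m \<otimes> x) = x"
  by (simp add: m_assoc[symmetric])

lemma inv_z: "inv z = z"
  by (rule inv_equality) auto

lemma inv_t: "1 \<le> m \<Longrightarrow> m < n \<Longrightarrow> inv (t m) = t m"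
  by (rule inv_equality) auto

lemma z_central: assumes "g \<in> carrier G" shows "z \<otimes> g = g \<otimes> z"
proof -
  have gen: "carrier G = generate G (insert z (t ` {1..n-1}))"
    using pres by (simp add: Tn_presented_def)
  have zt: "\<forall>i\<in>{1..n-1}. z \<otimes> t i = t i \<otimes> z"
    using pres by (simp add: Tn_presented_def)
  have "g \<in> generate G (insert z (t ` {1..n-1}))" using gen assms by simp
  thus ?thesis
  proof (induction rule: generate.induct)
    case one show ?case by simp
  next
    case (incl h) thus ?case using zt by auto
  next
    case (inv h)
    then consider "h = z" | i where "i \<in> {1..n-1}" "h = t i" by auto
    thus ?case
    proof cases
      case 1 thus ?thesis by (simp add: inv_z)
    next
      case 2 thus ?thesis using zt inv_t[of i] by auto
    qed
  next
    case (eng h1 h2)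
    have c: "h1 \<in> carrier G" "h2 \<in> carrier G" using eng.hyps gen by auto
    have "z \<otimes> (h1 \<otimes> h2) = (z \<otimes> h1) \<otimes> h2" using c by (simp add: m_assoc)
    also have "\<dots> = h1 \<otimes> (z \<otimes> h2)" using c eng.IH by (simp add: m_assoc)
    also have "\<dots> = (h1 \<otimes> h2) \<otimes> z" using c eng.IH by (simp add: m_assoc)
    finally show ?case .
  qed
qed

lemma zc2: "x \<in> carrier G \<Longrightarrow> y \<in> carrier G \<Longrightarrow> z \<otimes> (x \<otimes> y) = x \<otimes> (z \<otimes> y)"
  by (metis m_assoc z_car z_central)

lemma gen_z_central: assumes "c \<in> generate G {z}" "y \<in> carrier G" shows "c \<otimes> y = y \<otimes> c"
  using assms(1)
proof (induction rule: generate.induct)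
  case one then show ?case using assms by simp
next
  case (incl h) then show ?case using z_central assms by auto
next
  case (inv h) then show ?case using z_central assms by (auto simp: inv_z)
next
  case (eng h1 h2)
  have c: "h1 \<in> carrier G" "h2 \<in> carrier G" using eng.hyps generate_in_carrier[of "{z}"] by auto
  show ?case using c eng.IH assms by (metis m_assoc)
qed

lemma rel_far: assumes "1 \<le> k" "l < n" "k + 2 \<le> l"
  shows "t k \<otimes> (t l \<otimes> (t k \<otimes> t l)) = z"
proof -
  have "(t k \<otimes> t l) [^] (2::nat) = z"
    using pres assms unfolding Tn_presented_def by auto
  thus ?thesis using assms by (simp add: numeral_2_eq_2 m_assoc)
qed

lemma rel_br: assumes "1 \<le> j" "j + 1 < n"
  shows "t j \<otimes> (t (j+1) \<otimes> (t j \<otimes> (t (j+1) \<otimes> (t j \<otimes> t (j+1))))) = \<one>"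
proof -
  have "(t j \<otimes> t (j+1)) [^] (3::nat) = \<one>"
    using pres assms unfolding Tn_presented_def by auto
  thus ?thesis using assms by (simp add: numeral_3_eq_3 m_assoc)
qed

lemma swap0: assumes "1 \<le> k" "l < n" "k + 2 \<le> l"
  shows "t k \<otimes> t l = t l \<otimes> (t k \<otimes> z)" and "t l \<otimes> t k = t k \<otimes> (t l \<otimes> z)"
proof -
  have c: "t k \<in> carrier G" "t l \<in> carrier G" using assms by auto
  have r: "t k \<otimes> (t l \<otimes> (t k \<otimes> t l)) = z" by (rule rel_far[OF assms])
  have "t k \<otimes> t l = (t k \<otimes> (t l \<otimes> (t k \<otimes> t l))) \<otimes> (t l \<otimes> t k)"
    using c assms by (simp add: m_assoc)
  also have "\<dots> = t l \<otimes> (t k \<otimes> z)" using r c by (simp add: z_central m_assoc)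
  finally show "t k \<otimes> t l = t l \<otimes> (t k \<otimes> z)" .
  have "t l \<otimes> t k = t k \<otimes> ((t k \<otimes> (t l \<otimes> (t k \<otimes> t l))) \<otimes> t l)"
    using c assms by (simp add: m_assoc)
  also have "\<dots> = t k \<otimes> (t l \<otimes> z)" using r c by (simp add: z_central m_assoc)
  finally show "t l \<otimes> t k = t k \<otimes> (t l \<otimes> z)" .
qed

lemma swap: assumes "1 \<le> k" "k < n" "1 \<le> l" "l < n" "k + 2 \<le> l \<or> l + 2 \<le> k"
  shows "t k \<otimes> t l = t l \<otimes> (t k \<otimes> z)"
  using assms swap0[of k l] swap0[of l k] by auto

lemma swapx: assumes "1 \<le> k" "k < n" "1 \<le> l" "l < n" "k + 2 \<le> l \<or> l + 2 \<le> k" "x \<in> carrier G"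
  shows "t k \<otimes> (t l \<otimes> x) = t l \<otimes> (t k \<otimes> (z \<otimes> x))"
  using swap[OF assms(1-5)] assms by (simp add: m_assoc[symmetric])

lemma braid: assumes "1 \<le> j" "j + 1 < n"
  shows "t j \<otimes> (t (j+1) \<otimes> t j) = t (j+1) \<otimes> (t j \<otimes> t (j+1))"
proof -
  have c: "t j \<in> carrier G" "t (j+1) \<in> carrier G" using assms by auto
  have "t j \<otimes> (t (j+1) \<otimes> t j) = 
     (t j \<otimes> (t (j+1) \<otimes> (t j \<otimes> (t (j+1) \<otimes> (t j \<otimes> t (j+1)))))) \<otimes> (t (j+1) \<otimes> (t j \<otimes> t (j+1)))"
    using c assms by (simp add: m_assoc)
  also have "\<dots> = t (j+1) \<otimes> (t j \<otimes> t (j+1))" using rel_br[OF assms] c by simp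
  finally show ?thesis .
qed

lemma braidx: assumes "1 \<le> j" "j + 1 < n" "x \<in> carrier G"
  shows "t j \<otimes> (t (j+1) \<otimes> (t j \<otimes> x)) = t (j+1) \<otimes> (t j \<otimes> (t (j+1) \<otimes> x))"
  using braid[OF assms(1,2)] assms by (simp add: m_assoc[symmetric])

lemma tri_t: assumes "1 \<le> k" "k < n" "x \<in> carrier G"
  shows "tri G p (sadj k) x = t k \<otimes> x \<otimes> t k"
proof -
  have ex: "\<exists>g. g \<in> carrier G \<and> p g = sadj k" using pt assms by (intro exI[of _ "t k"]) auto
  define g where "g = (SOME g. g \<in> carrier G \<and> p g = sadj k)"
  have g: "g \<in> carrier G" "p g = sadj k" using someI_ex[OF ex] g_def by auto
  have "p (g \<otimes> t k) = p g \<circ> p (t k)"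
    using hom_mult[OF phom g(1) t_car[OF assms(1,2)]] by (simp add: sym_group_def)
  also have "\<dots> = id" using g pt assms by (simp add: sadj_def)
  finally have "g \<otimes> t k \<in> kernel G (sym_group n) p"
    unfolding kernel_def sym_group_def using g assms by simp
  hence cg: "g \<otimes> t k \<in> generate G {z}" using ker by simp
  define c where "c = g \<otimes> t k"
  have cc: "c \<in> carrier G" using c_def g assms by simp
  have gc: "g = c \<otimes> t k" using c_def g assms by (simp add: m_assoc)
  have "tri G p (sadj k) x = g \<otimes> x \<otimes> inv g" unfolding tri_def Let_def g_def by simp
  also have "\<dots> = c \<otimes> (t k \<otimes> x \<otimes> t k) \<otimes> inv c"
    using gc cc assms by (simp add: inv_mult_group inv_t m_assoc)
  also have "\<dots> = (t k \<otimes> x \<otimes> t k) \<otimes> c \<otimes> inv c"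
    using gen_z_central[OF cg[folded c_def], of "t k \<otimes> x \<otimes> t k"] assms cc by simp
  also have "\<dots> = t k \<otimes> x \<otimes> t k" using cc assms by (simp add: m_assoc)
  finally show ?thesis .
qed

abbreviation B where "B a d \<equiv> brk_up G p z t a d"

lemma B_car: "1 \<le> a \<Longrightarrow> a + d + 1 \<le> n \<Longrightarrow> B a d \<in> carrier G"
proof (induction d arbitrary: a)
  case 0 thus ?case by simp
next
  case (Suc d)
  have "B (Suc a) d \<in> carrier G" using Suc by simp
  thus ?case using Suc by (simp add: tri_t)
qed

lemma B_Suc: "1 \<le> a \<Longrightarrow> a + d + 2 \<le> n \<Longrightarrow> B a (Suc d) = t a \<otimes> (B (Suc a) d \<otimes> (t a \<otimes> z))"
  using B_car[of "Suc a" d] by (simp add: tri_t m_assoc)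

lemma zright: "x \<in> carrier G \<Longrightarrow> x \<otimes> z = z \<otimes> x"
  by (simp add: z_central)
lemma zleft: "x \<in> carrier G \<Longrightarrow> y \<in> carrier G \<Longrightarrow> x \<otimes> (z \<otimes> y) = z \<otimes> (x \<otimes> y)"
  by (simp add: zc2)
lemma tz: "1 \<le> m \<Longrightarrow> m < n \<Longrightarrow> t m \<otimes> z = z \<otimes> t m"
  by (simp add: z_central)
lemma tzy: "1 \<le> m \<Longrightarrow> m < n \<Longrightarrow> y \<in> carrier G \<Longrightarrow> t m \<otimes> (z \<otimes> y) = z \<otimes> (t m \<otimes> y)"
  by (simp add: zc2)
lemma yform: "a \<in> carrier G \<Longrightarrow> b \<in> carrier G \<Longrightarrow> c \<in> carrier G \<Longrightarrow> y \<in> carrier G \<Longrightarrow>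
   a \<otimes> (b \<otimes> c) = d \<Longrightarrow> a \<otimes> (b \<otimes> (c \<otimes> y)) = d \<otimes> y"
  by (simp add: m_assoc[symmetric])

lemmas nrm = m_assoc tz tzy

lemma L1: "1 \<le> a \<Longrightarrow> a + d + 1 \<le> n \<Longrightarrow> 1 \<le> k \<Longrightarrow> k < n \<Longrightarrow> k + 1 \<noteq> a \<Longrightarrow> k \<noteq> a
   \<Longrightarrow> k \<noteq> a + d \<Longrightarrow> k \<noteq> a + d + 1 \<Longrightarrow> t k \<otimes> (B a d \<otimes> t k) = B a d \<otimes> z"
proof (induction d arbitrary: a k rule: less_induct)
  case (less d a k)
  show ?case
  proof (cases d)
    case 0
    have far: "k + 2 \<le> a \<or> a + 2 \<le> k" using less.prems 0 by auto
    have "t k \<otimes> (t a \<otimes> t k) = t a \<otimes> (t k \<otimes> (z \<otimes> t k))"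
      using swapx[of k a "t k"] far less.prems 0 by auto
    also have "\<dots> = t a \<otimes> z" using less.prems 0 by (simp add: nrm)
    finally show ?thesis using 0 by simp
  next
    case (Suc d')
    note Bs = B_Suc[of a d']
    have ac: "1 \<le> a" "a < n" using less.prems Suc by auto
    have kc: "1 \<le> k" "k < n" using less.prems by auto
    have Xc: "B (Suc a) d' \<in> carrier G" using B_car[of "Suc a" d'] less.prems Suc by auto
    show ?thesis
    proof (cases "k = a + 1")
      case False
      have far: "k + 2 \<le> a \<or> a + 2 \<le> k" using less.prems False by auto
      have IH: "t k \<otimes> (B (Suc a) d' \<otimes> t k) = B (Suc a) d' \<otimes> z"
        using less.prems Suc False by (intro less.IH[of d' "Suc a" k]) auto
      have IHy: "\<And>y. y \<in> carrier G \<Longrightarrow> t k \<otimes> (B (Suc a) d' \<otimes> (t k \<otimes> y)) = B (Suc a) d' \<otimes> (z \<otimes> y)"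
        using yform[OF _ Xc _ _ IH] kc Xc by (simp add: m_assoc)
      have sw1: "t k \<otimes> (t a \<otimes> (B (Suc a) d' \<otimes> (t a \<otimes> t k))) = t a \<otimes> (t k \<otimes> (z \<otimes> (B (Suc a) d' \<otimes> (t a \<otimes> t k))))"
        using swapx[of k a] far ac kc Xc by auto
      have sw2: "t a \<otimes> t k = t k \<otimes> (t a \<otimes> z)"
        using swap[of a k] far ac kc by auto
      have "t k \<otimes> (B a d \<otimes> t k) = z \<otimes> (t k \<otimes> (t a \<otimes> (B (Suc a) d' \<otimes> (t a \<otimes> t k))))"
        using Bs less.prems Suc ac kc Xc by (simp add: nrm zleft[OF Xc] zright[OF Xc])
      also have "\<dots> = t a \<otimes> (t k \<otimes> (B (Suc a) d' \<otimes> (t a \<otimes> t k)))"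
        using sw1 ac kc Xc by (simp add: nrm zleft[OF Xc] zright[OF Xc])
      also have "\<dots> = t a \<otimes> (t k \<otimes> (B (Suc a) d' \<otimes> (t k \<otimes> (t a \<otimes> z))))"
        using sw2 by simp
      also have "\<dots> = t a \<otimes> (B (Suc a) d' \<otimes> (z \<otimes> (t a \<otimes> z)))"
        using IHy ac kc Xc by simp
      also have "\<dots> = B a d \<otimes> z"
        using Bs less.prems Suc ac kc Xc by (simp add: nrm zleft[OF Xc] zright[OF Xc])
      finally show ?thesis .
    next
      case True
      obtain d'' where d'': "d' = Suc d''" using True less.prems Suc by (cases d') auto
      note Bs2 = B_Suc[of "Suc a" d'']
      have Yc: "B (Suc (Suc a)) d'' \<in> carrier G" using B_car[of "Suc (Suc a)" d''] less.prems Suc d'' by auto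
      have kc': "a + 1 < n" using True kc by simp
      have IH: "t a \<otimes> (B (Suc (Suc a)) d'' \<otimes> t a) = B (Suc (Suc a)) d'' \<otimes> z"
        using less.prems Suc d'' True ac by (intro less.IH[of d'' "Suc (Suc a)" a]) auto
      have IHy: "\<And>y. y \<in> carrier G \<Longrightarrow> t a \<otimes> (B (Suc (Suc a)) d'' \<otimes> (t a \<otimes> y)) = B (Suc (Suc a)) d'' \<otimes> (z \<otimes> y)"
        using yform[OF _ Yc _ _ IH] ac Yc by (simp add: m_assoc)
      have br1: "t (a+1) \<otimes> (t a \<otimes> (t (a+1) \<otimes> (B (Suc (Suc a)) d'' \<otimes> (t (a+1) \<otimes> (t a \<otimes> t (a+1))))))
          = t a \<otimes> (t (a+1) \<otimes> (t a \<otimes> (B (Suc (Suc a)) d'' \<otimes> (t (a+1) \<otimes> (t a \<otimes> t (a+1))))))"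
        using braidx[of a] ac kc' Yc by simp
      have br2: "t (a+1) \<otimes> (t a \<otimes> t (a+1)) = t a \<otimes> (t (a+1) \<otimes> t a)"
        using braid[of a] ac kc' by simp
      have "t k \<otimes> (B a d \<otimes> t k) = t (a+1) \<otimes> (t a \<otimes> (t (a+1) \<otimes> (B (Suc (Suc a)) d'' \<otimes> (t (a+1) \<otimes> (t a \<otimes> t (a+1))))))"
        using Bs Bs2 less.prems Suc d'' True ac kc Yc by (simp add: nrm zleft[OF Yc] zright[OF Yc])
      also have "\<dots> = t a \<otimes> (t (a+1) \<otimes> (t a \<otimes> (B (Suc (Suc a)) d'' \<otimes> (t a \<otimes> (t (a+1) \<otimes> t a)))))"
        using br1 br2 by simp
      also have "\<dots> = t a \<otimes> (t (a+1) \<otimes> (B (Suc (Suc a)) d'' \<otimes> (z \<otimes> (t (a+1) \<otimes> t a))))"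
        using IHy ac kc' by simp
      also have "\<dots> = B a d \<otimes> z"
        using Bs Bs2 less.prems Suc d'' True ac kc Yc by (simp add: nrm zleft[OF Yc] zright[OF Yc])
      finally show ?thesis .
    qed
  qed
qed

lemma farstep:
  assumes ac: "1 \<le> a" "a < n" and kc: "1 \<le> k" "k < n" and far: "k + 2 \<le> a \<or> a + 2 \<le> k"
    and Xc: "U \<in> carrier G" and Yc: "V \<in> carrier G" and IH: "t k \<otimes> (U \<otimes> t k) = V \<otimes> z"
  shows "t k \<otimes> ((t a \<otimes> (U \<otimes> (t a \<otimes> z))) \<otimes> t k) = (t a \<otimes> (V \<otimes> (t a \<otimes> z))) \<otimes> z"
proof -
  have IHy: "\<And>y. y \<in> carrier G \<Longrightarrow> t k \<otimes> (U \<otimes> (t k \<otimes> y)) = V \<otimes> (z \<otimes> y)"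
    using yform[OF _ Xc _ _ IH] kc Xc Yc by (simp add: m_assoc)
  have sw1: "t k \<otimes> (t a \<otimes> (U \<otimes> (t a \<otimes> t k))) = t a \<otimes> (t k \<otimes> (z \<otimes> (U \<otimes> (t a \<otimes> t k))))"
    using swapx[of k a] far ac kc Xc by auto
  have sw2: "t a \<otimes> t k = t k \<otimes> (t a \<otimes> z)"
    using swap[of a k] far ac kc by auto
  have "t k \<otimes> ((t a \<otimes> (U \<otimes> (t a \<otimes> z))) \<otimes> t k) = z \<otimes> (t k \<otimes> (t a \<otimes> (U \<otimes> (t a \<otimes> t k))))"
    using ac kc Xc by (simp add: nrm zleft[OF Xc] zright[OF Xc])
  also have "\<dots> = t a \<otimes> (t k \<otimes> (U \<otimes> (t a \<otimes> t k)))"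
    using sw1 ac kc Xc by (simp add: nrm zleft[OF Xc] zright[OF Xc])
  also have "\<dots> = t a \<otimes> (t k \<otimes> (U \<otimes> (t k \<otimes> (t a \<otimes> z))))"
    using sw2 by simp
  also have "\<dots> = t a \<otimes> (V \<otimes> (z \<otimes> (t a \<otimes> z)))"
    using IHy ac kc Xc by simp
  also have "\<dots> = (t a \<otimes> (V \<otimes> (t a \<otimes> z))) \<otimes> z"
    using ac kc Yc by (simp add: nrm zleft[OF Yc] zright[OF Yc])
  finally show ?thesis .
qed

lemma L2: "1 \<le> c \<Longrightarrow> Suc c + d + 1 \<le> n \<Longrightarrow> t c \<otimes> (B (Suc c) d \<otimes> t c) = B c (Suc d) \<otimes> z"
  using B_Suc[of c d] B_car[of "Suc c" d] by (simp add: m_assoc)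

lemma L3: "1 \<le> a \<Longrightarrow> a + Suc d + 1 \<le> n \<Longrightarrow> t a \<otimes> (B a (Suc d) \<otimes> t a) = B (Suc a) d \<otimes> z"
  using B_Suc[of a d] B_car[of "Suc a" d] by (simp add: nrm)

lemma L3': "1 \<le> a \<Longrightarrow> a < n \<Longrightarrow> t a \<otimes> (B a 0 \<otimes> t a) = B a 0"
  by (simp add: m_assoc[symmetric])

lemma L4: "1 \<le> a \<Longrightarrow> a + Suc d + 1 \<le> n \<Longrightarrow> t (a + Suc d) \<otimes> (B a (Suc d) \<otimes> t (a + Suc d)) = B a d \<otimes> z"
proof (induction d arbitrary: a)
  case 0
  have ac: "1 \<le> a" "a + 1 < n" using 0 by auto
  have br: "t (a+1) \<otimes> (t a \<otimes> (t (a+1) \<otimes> (t a \<otimes> t (a+1)))) = t a \<otimes> (t (a+1) \<otimes> (t a \<otimes> (t a \<otimes> t (a+1))))"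
    using braidx[of a "t a \<otimes> t (a+1)"] ac by simp
  have "t (a + Suc 0) \<otimes> (B a (Suc 0) \<otimes> t (a + Suc 0)) = z \<otimes> (t (a+1) \<otimes> (t a \<otimes> (t (a+1) \<otimes> (t a \<otimes> t (a+1)))))"
    using B_Suc[of a 0] ac by (simp add: nrm)
  also have "\<dots> = z \<otimes> t a" using br ac by simp
  finally show ?case using ac by (simp add: tz)
next
  case (Suc d)
  have Xc: "B (Suc a) (Suc d) \<in> carrier G" using B_car[of "Suc a" "Suc d"] Suc.prems by simp
  have Yc: "B (Suc a) d \<in> carrier G" using B_car[of "Suc a" d] Suc.prems by simp
  have IH: "t (a + Suc (Suc d)) \<otimes> (B (Suc a) (Suc d) \<otimes> t (a + Suc (Suc d))) = B (Suc a) d \<otimes> z"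
    using Suc.IH[of "Suc a"] Suc.prems by simp
  show ?case
    using farstep[OF _ _ _ _ _ Xc Yc IH, of a] B_Suc[of a "Suc d"] B_Suc[of a d] Suc.prems by simp
qed

lemma L5: "1 \<le> a \<Longrightarrow> a + d + 2 \<le> n \<Longrightarrow> t (a + d + 1) \<otimes> (B a d \<otimes> t (a + d + 1)) = B a (Suc d) \<otimes> z"
proof (induction d arbitrary: a)
  case 0
  have ac: "1 \<le> a" "a + 1 < n" using 0 by auto
  have br: "t (a+1) \<otimes> (t a \<otimes> t (a+1)) = t a \<otimes> (t (a+1) \<otimes> t a)"
    using braid[of a] ac by simp
  show ?case using B_Suc[of a 0] ac br by (simp add: nrm)
next
  case (Suc d)
  have Xc: "B (Suc a) d \<in> carrier G" using B_car[of "Suc a" d] Suc.prems by simp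
  have Yc: "B (Suc a) (Suc d) \<in> carrier G" using B_car[of "Suc a" "Suc d"] Suc.prems by simp
  have IH: "t (a + Suc d + 1) \<otimes> (B (Suc a) d \<otimes> t (a + Suc d + 1)) = B (Suc a) (Suc d) \<otimes> z"
    using Suc.IH[of "Suc a"] Suc.prems by simp
  show ?case
    using farstep[OF _ _ _ _ _ Xc Yc IH, of a] B_Suc[of a "Suc d"] B_Suc[of a d] Suc.prems by simp
qed

abbreviation br where "br i j \<equiv> brk G p z t i j"

lemma Main_lt: assumes "1 \<le> a" "a + d + 1 \<le> n" "1 \<le> k" "k < n"
  shows "t k \<otimes> (B a d \<otimes> t k) = br (sadj k a) (sadj k (a + d + 1)) \<otimes> z"
proof -
  consider (c1) "k + 1 = a" | (c2) "k = a" "d = 0" | (c3) d' where "k = a" "d = Suc d'"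
    | (c4) d' where "k = a + d" "d = Suc d'" | (c5) "k = a + d + 1"
    | (c6) "k + 1 \<noteq> a" "k \<noteq> a" "k \<noteq> a + d" "k \<noteq> a + d + 1"
    by (cases d) auto
  thus ?thesis
  proof cases
    case c1
    have "t k \<otimes> (B (Suc k) d \<otimes> t k) = B k (Suc d) \<otimes> z"
      using assms c1 by (intro L2) auto
    thus ?thesis using assms c1 by (auto simp: sadj_def transpose_def brk_def)
  next
    case c2
    thus ?thesis using assms L3'[of a] by (auto simp: sadj_def transpose_def brk_def m_assoc)
  next
    case (c3 d')
    thus ?thesis using assms L3[of a d'] by (auto simp: sadj_def transpose_def brk_def)
  next
    case (c4 d')
    thus ?thesis using assms L4[of a d'] by (auto simp: sadj_def transpose_def brk_def)
  next
    case c5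
    thus ?thesis using assms L5[of a d] by (auto simp: sadj_def transpose_def brk_def)
  next
    case c6
    thus ?thesis using assms L1[of a d k] by (auto simp: sadj_def transpose_def brk_def)
  qed
qed

lemma br_car: "i \<in> {1..n} \<Longrightarrow> j \<in> {1..n} \<Longrightarrow> i \<noteq> j \<Longrightarrow> br i j \<in> carrier G"
  by (auto simp: brk_def intro!: B_car)

lemma br_swap: assumes "i \<in> {1..n}" "j \<in> {1..n}" "i \<noteq> j" shows "br i j \<otimes> z = br j i"
proof (cases "i < j")
  case True thus ?thesis by (simp add: brk_def)
next
  case False
  have "br i j = br j i \<otimes> z" using False assms by (simp add: brk_def)
  thus ?thesis using br_car[of j i] assms by (simp add: m_assoc)
qed

lemma main: assumes "i \<in> {1..n}" "j \<in> {1..n}" "i \<noteq> j" "k \<in> {1..n-1}"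
  shows "tri G p (sadj k) (br i j) = br (sadj k i) (sadj k j) \<otimes> z"
proof -
  have kc: "1 \<le> k" "k < n" using assms by auto
  have si: "sadj k i \<in> {1..n}" "sadj k j \<in> {1..n}" "sadj k i \<noteq> sadj k j"
    using assms kc by (auto simp: sadj_def transpose_def)
  show ?thesis
  proof (cases "i < j")
    case True
    have e: "br i j = B i (j - i - 1)" using True by (simp add: brk_def)
    have jj: "i + (j - i - 1) + 1 = j" using True by simp
    have "tri G p (sadj k) (br i j) = t k \<otimes> (B i (j - i - 1) \<otimes> t k)"
      using e tri_t[OF kc, of "br i j"] br_car[OF assms(1-3)] kc by (simp add: m_assoc)
    also have "\<dots> = br (sadj k i) (sadj k j) \<otimes> z"
      using Main_lt[of i "j - i - 1" k] assms True kc jj by auto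
    finally show ?thesis .
  next
    case False
    hence F: "j < i" using assms by simp
    have e: "br i j = B j (i - j - 1) \<otimes> z" using F by (simp add: brk_def)
    have jj: "j + (i - j - 1) + 1 = i" using F by simp
    have Bc: "B j (i - j - 1) \<in> carrier G" using assms F by (intro B_car) auto
    have "tri G p (sadj k) (br i j) = (t k \<otimes> (B j (i - j - 1) \<otimes> t k)) \<otimes> z"
      using e tri_t[OF kc, of "br i j"] br_car[OF assms(1-3)] kc Bc
      by (simp add: m_assoc zleft[OF Bc] zright[OF Bc] tz tzy)
    also have "\<dots> = br (sadj k j) (sadj k i) \<otimes> z \<otimes> z"
      using Main_lt[of j "i - j - 1" k] assms F kc jj by auto
    also have "\<dots> = br (sadj k j) (sadj k i)"
      using br_car[of "sadj k j" "sadj k i"] si by (simp add: m_assoc)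
    also have "\<dots> = br (sadj k i) (sadj k j) \<otimes> z"
      using br_swap[of "sadj k i" "sadj k j"] si by simp
    finally show ?thesis .
  qed
qed

end

theorem lemma3p4:
  fixes G :: "('a, 'b) monoid_scheme" and n :: nat and z :: 'a and t :: "nat \<Rightarrow> 'a"
    and p :: "'a \<Rightarrow> nat \<Rightarrow> nat" and i j k :: nat
  assumes "n \<ge> 4"
    and "Tn_presented G n z t"
    and "z \<noteq> \<one>\<^bsub>G\<^esub>"
    and "p \<in> hom G (sym_group n)"
    and "\<forall>m\<in>{1..n-1}. p (t m) = sadj m"
    and "p z = id"
    and "kernel G (sym_group n) p = generate G {z}"
    and "i \<in> {1..n}" and "j \<in> {1..n}" and "i \<noteq> j" and "k \<in> {1..n-1}"
  shows "tri G p (sadj k) (brk G p z t i j) = brk G p z t (sadj k i) (sadj k j) \<otimes>\<^bsub>G\<^esub> z"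
proof -
  interpret tnp G n z t p
    using assms(2,4,5,7) by unfold_locales
  show ?thesis using main[OF assms(8-11)] .
qed

end
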